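(* Let $(p_n)_{n\ge1}$ be a sequence in $[0,1]$ with $p_n \ll \frac{1}{n^3}$, i.e. $\lim_{n\to\infty} n^3 p_n = 0$. Let $G_n$ be the Erdős–Rényi random graph on the vertex set $\mathcal C^0_n$ with edge probability $p_n$, and let $R_n$ be the reaction network associated to $G_n$. Then \[ \lim_{n\to\infty}\mathbb P(\delta_{R_n}=0)=1 . \]
   Context: A reaction network on species $S_1,\dots,S_n$ consists of a finite set $\mathcal R$ of reactions $y\to y'$ where $y\neq y'$ are complexes, i.e. vectors in $\mathbb Z^n_{\ge0}$; $\mathcal C$ is the set of complexes appearing in some reaction. Its graph has vertex set $\mathcal C$ and a directed edge $y\to y'$ for each reaction; $\ell$ denotes the number of connected components of this graph (ignoring edge directions), $s=\dim\operatorname{span}\{y'-y: y\to y'\in\mathcal R\}$, and the deficiency is $\delta=|\mathcal C|-\ell-s$ (the empty network, with no reactions, has $\delta=0$). Let $e_i$ be the $i$-th standard basis vector of $\mathbb Z^n$ and $\mathcal C^0_n=\{0\}\cup\{e_i:1\le i\le n\}\cup\{e_i+e_j:1\le i\le j\le n\}$, so $N_n=|\mathcal C^0_n|=\frac{n^2+3n+2}{2}$. $G_n$ is the Erdős–Rényi random graph on vertex set $\mathcal C^0_n$ in which each of the $\binom{N_n}{2}$ possible undirected edges is present independently with probability $p_n$. The associated reaction network $R_n$ has species $S_1,\dots,S_n$, complex set equal to the set of vertices of $G_n$ of positive degree, and for each edge $\{y,y'\}$ of $G_n$ the two reactions $y\to y'$ and $y'\to y$. $\delta_{R_n}$ denotes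 the deficiency of $R_n$. *)

theory Defs
  imports Complex_Main
begin

text \<open>Complexes are vectors in Z_{\<ge>0}^n, represented as functions nat \<Rightarrow> nat
  (species indexed 0..n-1). A reaction network is a set of reactions (y, y').\<close>

type_synonym complex = "nat \<Rightarrow> nat"
type_synonym reaction_network = "(complex \<times> complex) set"

definition unit_vec :: "nat \<Rightarrow> complex" where
  "unit_vec i = (\<lambda>k. if k = i then 1 else 0)"

definition C0 :: "nat \<Rightarrow> complex set" where
  "C0 n = {\<lambda>_. 0} \<union> {unit_vec i | i. i < n}
          \<union> {(\<lambda>k. unit_vec i k + unit_vec j k) | i j. i \<le> j \<and> j < n}"

definition complexes :: "reaction_network \<Rightarrow> complex set" where
  "complexes R = fst ` R \<union> snd ` R"

definition num_linkage_classes :: "reaction_network \<Rightarrow> nat" where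
  "num_linkage_classes R =
     card (complexes R // (((R \<union> R\<inverse>)\<^sup>*) \<inter> (complexes R \<times> complexes R)))"

definition reaction_vec :: "complex \<Rightarrow> complex \<Rightarrow> (nat \<Rightarrow> real)" where
  "reaction_vec y y' = (\<lambda>i. real (y' i) - real (y i))"

definition lin_indep :: "(nat \<Rightarrow> real) set \<Rightarrow> bool" where
  "lin_indep B \<longleftrightarrow> finite B \<and>
     (\<forall>c. (\<forall>i. (\<Sum>v\<in>B. c v * v i) = 0) \<longrightarrow> (\<forall>v\<in>B. c v = 0))"

definition span_dim :: "(nat \<Rightarrow> real) set \<Rightarrow> nat" where
  "span_dim D = Max (card ` {B. B \<subseteq> D \<and> lin_indep B})"

definition stoich_dim :: "reaction_network \<Rightarrow> nat" where
  "stoich_dim R = span_dim {reaction_vec y y' | y y'. (y, y') \<in> R}"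

definition deficiency :: "reaction_network \<Rightarrow> int" where
  "deficiency R = int (card (complexes R)) - int (num_linkage_classes R) - int (stoich_dim R)"

definition possible_edges :: "nat \<Rightarrow> complex set set" where
  "possible_edges n = {{y, y'} | y y'. y \<in> C0 n \<and> y' \<in> C0 n \<and> y \<noteq> y'}"

text \<open>Reaction network associated to a graph with edge set E: both directions of each edge.
  Its complexes are exactly the vertices of positive degree.\<close>
definition network_of :: "complex set set \<Rightarrow> reaction_network" where
  "network_of E = {(y, y') | y y'. {y, y'} \<in> E \<and> y \<noteq> y'}"

definition ER_weight :: "nat \<Rightarrow> real \<Rightarrow> complex set set \<Rightarrow> real" where
  "ER_weight n p E = p ^ card E * (1 - p) ^ (card (possible_edges n) - card E)"

definition ER_prob :: "nat \<Rightarrow> real \<Rightarrow> (complex set set \<Rightarrow> bool) \<Rightarrow> real" where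
  "ER_prob n p Q = (\<Sum>E\<in>{E. E \<subseteq> possible_edges n \<and> Q E}. ER_weight n p E)"

end

theory Submission
  imports Defs "HOL-Library.FuncSet"
begin

lemma pow_sum_one:
  fixes p :: real
  assumes "finite A"
  shows "(\<Sum>G\<in>Pow A. p ^ card G * (1 - p) ^ (card A - card G)) = 1"
  using assms
proof (induction A rule: finite_induct)
  case empty
  then show ?case by simp
next
  case (insert a A)
  have fin: "finite (Pow A)" using insert by simp
  have disj: "Pow A \<inter> insert a ` Pow A = {}" using insert by auto
  have inj: "inj_on (insert a) (Pow A)" unfolding inj_on_def
    by (metis Pow_iff Diff_insert_absorb insert.hyps(2) subsetD)
  have cG: "\<And>G. G \<in> Pow A \<Longrightarrow> card G \<le> card A"
    using insert by (simp add: card_mono)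
  have "(\<Sum>G\<in>Pow (insert a A). p ^ card G * (1 - p) ^ (card (insert a A) - card G))
      = (\<Sum>G\<in>Pow A. p ^ card G * (1 - p) ^ (card (insert a A) - card G))
        + (\<Sum>G\<in>insert a ` Pow A. p ^ card G * (1 - p) ^ (card (insert a A) - card G))"
    unfolding Pow_insert using fin disj by (simp add: sum.union_disjoint)
  also have "(\<Sum>G\<in>Pow A. p ^ card G * (1 - p) ^ (card (insert a A) - card G))
      = (1 - p) * (\<Sum>G\<in>Pow A. p ^ card G * (1 - p) ^ (card A - card G))"
    unfolding sum_distrib_left
  proof (rule sum.cong)
    fix G assume "G \<in> Pow A"
    then have "card (insert a A) - card G = Suc (card A - card G)"
      using cG insert by (simp add: Suc_diff_le)
    then show "p ^ card G * (1 - p) ^ (card (insert a A) - card G) =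
        (1 - p) * (p ^ card G * (1 - p) ^ (card A - card G))" by simp
  qed simp
  also have "(\<Sum>G\<in>insert a ` Pow A. p ^ card G * (1 - p) ^ (card (insert a A) - card G))
      = (\<Sum>G\<in>Pow A. p ^ card (insert a G) * (1 - p) ^ (card (insert a A) - card (insert a G)))"
    using inj by (simp add: sum.reindex)
  also have "\<dots> = p * (\<Sum>G\<in>Pow A. p ^ card G * (1 - p) ^ (card A - card G))"
    unfolding sum_distrib_left
  proof (rule sum.cong)
    fix G assume G: "G \<in> Pow A"
    then have "a \<notin> G" "finite G" using insert finite_subset by auto
    then show "p ^ card (insert a G) * (1 - p) ^ (card (insert a A) - card (insert a G)) =
        p * (p ^ card G * (1 - p) ^ (card A - card G))" using insert by simp
  qed simp
  finally show ?case using insert by simp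
qed

lemma fin_C0: "finite (C0 n)"
proof -
  have "C0 n = {\<lambda>_. 0} \<union> unit_vec ` {..<n} \<union> (\<lambda>(i,j). (\<lambda>k. unit_vec i k + unit_vec j k)) ` {(i,j). i \<le> j \<and> j < n}"
    unfolding C0_def by auto
  moreover have "finite {(i,j). i \<le> j \<and> j < (n::nat)}"
    by (rule finite_subset[of _ "{..<n} \<times> {..<n}"]) auto
  ultimately show ?thesis by simp
qed

lemma fin_PE: "finite (possible_edges n)"
proof -
  have "possible_edges n \<subseteq> (\<lambda>(y,y'). {y,y'}) ` (C0 n \<times> C0 n)"
    unfolding possible_edges_def by auto
  then show ?thesis using fin_C0 finite_subset by blast
qed

lemma fin_PE_elem: "e \<in> possible_edges n \<Longrightarrow> finite e"
  unfolding possible_edges_def by auto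

lemma ER_contain:
  fixes p :: real
  assumes "F \<subseteq> possible_edges n"
  shows "(\<Sum>E\<in>{E. E \<subseteq> possible_edges n \<and> F \<subseteq> E}. ER_weight n p E) = p ^ card F"
proof -
  let ?P = "possible_edges n"
  have finP: "finite ?P" by (rule fin_PE)
  have finF: "finite F" using assms finP finite_subset by blast
  have eq: "{E. E \<subseteq> ?P \<and> F \<subseteq> E} = (\<lambda>G. F \<union> G) ` Pow (?P - F)" using assms by auto
  have inj: "inj_on (\<lambda>G. F \<union> G) (Pow (?P - F))" unfolding inj_on_def by blast
  have "(\<Sum>E\<in>{E. E \<subseteq> ?P \<and> F \<subseteq> E}. ER_weight n p E)
      = (\<Sum>G\<in>Pow (?P - F). ER_weight n p (F \<union> G))"
    unfolding eq using inj by (simp add: sum.reindex)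
  also have "\<dots> = (\<Sum>G\<in>Pow (?P - F). p ^ card F * (p ^ card G * (1 - p) ^ (card (?P - F) - card G)))"
  proof (rule sum.cong)
    fix G assume G: "G \<in> Pow (?P - F)"
    then have finG: "finite G" using finP finite_subset by blast
    have dj: "F \<inter> G = {}" using G by auto
    have c1: "card (F \<union> G) = card F + card G" using finF finG dj by (simp add: card_Un_disjoint)
    have c2: "card (?P - F) = card ?P - card F" using assms finF by (simp add: card_Diff_subset)
    have c3: "card G \<le> card (?P - F)" using G finP by (simp add: card_mono)
    have c4: "card F \<le> card ?P" using assms finP by (simp add: card_mono)
    have "card ?P - card (F \<union> G) = card (?P - F) - card G" using c1 c2 c3 c4 by simp
    then show "ER_weight n p (F \<union> G) = p ^ card F * (p ^ card G * (1 - p) ^ (card (?P - F) - card G))"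
      unfolding ER_weight_def using c1 by (simp add: power_add)
  qed simp
  also have "\<dots> = p ^ card F" using pow_sum_one[of "?P - F" p] finP
    by (simp add: sum_distrib_left[symmetric])
  finally show ?thesis .
qed

lemma ER_weight_nonneg: "0 \<le> p \<Longrightarrow> p \<le> 1 \<Longrightarrow> 0 \<le> ER_weight n p E"
  unfolding ER_weight_def by simp

lemma ER_prob_True: "ER_prob n p (\<lambda>_. True) = 1"
  using ER_contain[of "{}" n p] unfolding ER_prob_def by simp

lemma fin_Q: "finite {E. E \<subseteq> possible_edges n \<and> Q E}"
  by (rule finite_subset[of _ "Pow (possible_edges n)"]) (auto simp: fin_PE)

lemma ER_prob_compl: "ER_prob n p (\<lambda>E. \<not> Q E) = 1 - ER_prob n p Q"
proof -
  have e: "{E. E \<subseteq> possible_edges n \<and> True} = {E. E \<subseteq> possible_edges n \<and> \<not> Q E} \<union> {E. E \<subseteq> possible_edges n \<and> Q E}"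
    by auto
  have "ER_prob n p (\<lambda>_. True) = ER_prob n p (\<lambda>E. \<not> Q E) + ER_prob n p Q"
    unfolding ER_prob_def e by (rule sum.union_disjoint) (rule fin_Q, rule fin_Q, blast)
  then show ?thesis using ER_prob_True[of n p] by simp
qed

lemma ER_prob_mono:
  assumes "0 \<le> p" "p \<le> 1" "\<And>E. E \<subseteq> possible_edges n \<Longrightarrow> Q E \<Longrightarrow> Q' E"
  shows "ER_prob n p Q \<le> ER_prob n p Q'"
proof -
  have "{E. E \<subseteq> possible_edges n \<and> Q E} \<subseteq> {E. E \<subseteq> possible_edges n \<and> Q' E}"
    using assms(3) by blast
  then show ?thesis unfolding ER_prob_def
    by (intro sum_mono2 fin_Q) (simp_all add: ER_weight_nonneg assms(1,2))
qed

lemma ER_prob_disj: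
  assumes "0 \<le> p" "p \<le> 1"
  shows "ER_prob n p (\<lambda>E. Q1 E \<or> Q2 E) \<le> ER_prob n p Q1 + ER_prob n p Q2"
proof -
  have e: "{E. E \<subseteq> possible_edges n \<and> (Q1 E \<or> Q2 E)} = {E. E \<subseteq> possible_edges n \<and> Q1 E} \<union> {E. E \<subseteq> possible_edges n \<and> Q2 E}"
    by auto
  have "ER_prob n p (\<lambda>E. Q1 E \<or> Q2 E) = ER_prob n p Q1 + ER_prob n p Q2 -
      (\<Sum>E\<in>{E. E \<subseteq> possible_edges n \<and> Q1 E} \<inter> {E. E \<subseteq> possible_edges n \<and> Q2 E}. ER_weight n p E)"
    unfolding ER_prob_def e by (rule sum_Un) (rule fin_Q)+
  moreover have "0 \<le> (\<Sum>E\<in>{E. E \<subseteq> possible_edges n \<and> Q1 E} \<inter> {E. E \<subseteq> possible_edges n \<and> Q2 E}. ER_weight n p E)"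
    by (rule sum_nonneg) (simp add: ER_weight_nonneg assms)
  ultimately show ?thesis by linarith
qed

lemma union_bound:
  fixes p :: real
  assumes p: "0 \<le> p" "p \<le> 1" and T: "finite T" and g: "\<And>t. t \<in> T \<Longrightarrow> g t \<subseteq> possible_edges n"
  shows "ER_prob n p (\<lambda>E. \<exists>t\<in>T. g t \<subseteq> E) \<le> (\<Sum>t\<in>T. p ^ card (g t))"
proof -
  let ?U = "{E. E \<subseteq> possible_edges n}"
  have f: "finite ?U" using fin_PE by simp
  have "ER_prob n p (\<lambda>E. \<exists>t\<in>T. g t \<subseteq> E) = (\<Sum>E\<in>?U. (if \<exists>t\<in>T. g t \<subseteq> E then ER_weight n p E else 0))"
    unfolding ER_prob_def using f by (simp add: sum.inter_filter[symmetric])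
  also have "\<dots> \<le> (\<Sum>E\<in>?U. (\<Sum>t\<in>T. if g t \<subseteq> E then ER_weight n p E else 0))"
  proof (rule sum_mono)
    fix E assume "E \<in> ?U"
    show "(if \<exists>t\<in>T. g t \<subseteq> E then ER_weight n p E else 0) \<le> (\<Sum>t\<in>T. if g t \<subseteq> E then ER_weight n p E else 0)"
    proof (cases "\<exists>t\<in>T. g t \<subseteq> E")
      case True
      then obtain t where t: "t \<in> T" "g t \<subseteq> E" by blast
      have "ER_weight n p E = (if g t \<subseteq> E then ER_weight n p E else 0)" using t by simp
      also have "\<dots> \<le> (\<Sum>t\<in>T. if g t \<subseteq> E then ER_weight n p E else 0)"
        by (rule member_le_sum) (use t T ER_weight_nonneg[OF p] in auto)
      finally show ?thesis using True by simp
    next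
      case False
      then show ?thesis using ER_weight_nonneg[OF p] by (simp add: sum_nonneg)
    qed
  qed
  also have "\<dots> = (\<Sum>t\<in>T. \<Sum>E\<in>?U. if g t \<subseteq> E then ER_weight n p E else 0)"
    by (rule sum.swap)
  also have "\<dots> = (\<Sum>t\<in>T. p ^ card (g t))"
  proof (rule sum.cong)
    fix t assume t: "t \<in> T"
    have "(\<Sum>E\<in>?U. if g t \<subseteq> E then ER_weight n p E else 0) = (\<Sum>E\<in>{E. E \<subseteq> possible_edges n \<and> g t \<subseteq> E}. ER_weight n p E)"
      using f by (simp add: sum.inter_filter[symmetric])
    also have "\<dots> = p ^ card (g t)" by (rule ER_contain[OF g[OF t]])
    finally show "(\<Sum>E\<in>?U. if g t \<subseteq> E then ER_weight n p E else 0) = p ^ card (g t)" .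
  qed simp
  finally show ?thesis .
qed

definition Dset :: "complex set \<Rightarrow> nat set" where
  "Dset e = {i. \<exists>y\<in>e. \<exists>y'\<in>e. y i \<noteq> y' i}"

definition Av :: "nat \<Rightarrow> nat \<Rightarrow> complex set" where
  "Av n c = {y \<in> C0 n. y c \<noteq> 0}"

definition Mid :: "nat \<Rightarrow> nat \<Rightarrow> nat \<Rightarrow> complex set set" where
  "Mid n c d = {e \<in> possible_edges n. c \<in> Dset e \<and> d \<in> Dset e}"

definition Leaf :: "nat \<Rightarrow> nat \<Rightarrow> complex set set" where
  "Leaf n c = {e \<in> possible_edges n. Dset e \<subseteq> {c}}"

lemma C0_cases:
  assumes "y \<in> C0 n"
  shows "y = (\<lambda>_. 0) \<or> (\<exists>i<n. y = unit_vec i) \<or> (\<exists>i j. i \<le> j \<and> j < n \<and> y = (\<lambda>k. unit_vec i k + unit_vec j k))"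
  using assms unfolding C0_def by blast

lemma C0_le2: "y \<in> C0 n \<Longrightarrow> y i \<le> 2"
  using C0_cases[of y n] unfolding unit_vec_def by auto

lemma C0_zero: "y \<in> C0 n \<Longrightarrow> n \<le> i \<Longrightarrow> y i = 0"
  using C0_cases[of y n] unfolding unit_vec_def by auto

lemma card_C0: "card (C0 n) \<le> (n+1)^2"
proof -
  have e: "C0 n = {\<lambda>_. 0} \<union> unit_vec ` {..<n} \<union> (\<lambda>(i,j). (\<lambda>k. unit_vec i k + unit_vec j k)) ` {(i,j). i \<le> j \<and> j < n}"
    unfolding C0_def by auto
  have f: "finite {(i,j). i \<le> j \<and> j < (n::nat)}"
    by (rule finite_subset[of _ "{..<n} \<times> {..<n}"]) auto
  have c1: "card {(i,j). i \<le> j \<and> j < (n::nat)} \<le> n * n"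
  proof -
    have "card {(i,j). i \<le> j \<and> j < (n::nat)} \<le> card ({..<n} \<times> {..<n})"
      by (rule card_mono) auto
    then show ?thesis by (simp add: card_cartesian_product)
  qed
  have "card (C0 n) \<le> card ({\<lambda>_. 0} \<union> unit_vec ` {..<n}) + card ((\<lambda>(i,j). (\<lambda>k. unit_vec i k + unit_vec j k)) ` {(i,j). i \<le> j \<and> j < n})"
    unfolding e by (rule card_Un_le)
  also have "\<dots> \<le> (1 + n) + n * n"
  proof (rule add_mono)
    have "card ({\<lambda>_. 0} \<union> unit_vec ` {..<n}) \<le> card {\<lambda>_::nat. 0::nat} + card (unit_vec ` {..<n})"
      by (rule card_Un_le)
    also have "\<dots> \<le> 1 + n" using card_image_le[of "{..<n}" unit_vec] by simp
    finally show "card ({\<lambda>_. 0} \<union> unit_vec ` {..<n}) \<le> 1 + n" .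
    show "card ((\<lambda>(i,j). (\<lambda>k. unit_vec i k + unit_vec j k)) ` {(i,j). i \<le> j \<and> j < n}) \<le> n * n"
      using card_image_le[OF f, of "(\<lambda>(i,j). (\<lambda>k. unit_vec i k + unit_vec j k))"] c1 by linarith
  qed
  also have "\<dots> \<le> (n+1)^2" by (simp add: power2_eq_square)
  finally show ?thesis .
qed

lemma PE_elem:
  assumes "e \<in> possible_edges n"
  obtains y y' where "e = {y, y'}" "y \<in> C0 n" "y' \<in> C0 n" "y \<noteq> y'"
  using assms unfolding possible_edges_def by blast

lemma Dset_pair: "Dset {y, y'} = {i. y i \<noteq> y' i}"
  unfolding Dset_def by auto

lemma Dset_sub: "e \<in> possible_edges n \<Longrightarrow> Dset e \<subseteq> {..<n}"
  by (erule PE_elem) (auto simp: Dset_pair C0_zero leI)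

lemma Dset_ne: "e \<in> possible_edges n \<Longrightarrow> Dset e \<noteq> {}"
  by (erule PE_elem) (auto simp: Dset_pair)

lemma card_Av: "card (Av n c) \<le> 2 * n + 1"
proof -
  have "Av n c \<subseteq> {unit_vec c} \<union> (\<lambda>j. (\<lambda>k. unit_vec c k + unit_vec j k)) ` {..<n}
        \<union> (\<lambda>i. (\<lambda>k. unit_vec i k + unit_vec c k)) ` {..<n}"
  proof
    fix y assume "y \<in> Av n c"
    then have y: "y \<in> C0 n" "y c \<noteq> 0" unfolding Av_def by auto
    have uv: "\<And>i. unit_vec i c \<noteq> 0 \<Longrightarrow> i = c" unfolding unit_vec_def by (auto split: if_splits)
    consider "y = (\<lambda>_. 0)" | i where "i < n" "y = unit_vec i"
      | i j where "i \<le> j" "j < n" "y = (\<lambda>k. unit_vec i k + unit_vec j k)"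
      using C0_cases[OF y(1)] by blast
    then show "y \<in> {unit_vec c} \<union> (\<lambda>j. (\<lambda>k. unit_vec c k + unit_vec j k)) ` {..<n}
        \<union> (\<lambda>i. (\<lambda>k. unit_vec i k + unit_vec c k)) ` {..<n}"
    proof cases
      case 1 then show ?thesis using y(2) by simp
    next
      case (2 i)
      then have "i = c" using y(2) uv by simp
      then show ?thesis using 2 by simp
    next
      case (3 i j)
      then have "unit_vec i c \<noteq> 0 \<or> unit_vec j c \<noteq> 0" using y(2) by simp
      then have "i = c \<or> j = c" using uv by blast
      then show ?thesis using 3 by auto
    qed
  qed
  then have "card (Av n c) \<le> card ({unit_vec c} \<union> (\<lambda>j. (\<lambda>k. unit_vec c k + unit_vec j k)) ` {..<n}
        \<union> (\<lambda>i. (\<lambda>k. unit_vec i k + unit_vec c k)) ` {..<n})"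
    by (rule card_mono[rotated]) simp
  also have "\<dots> \<le> card {unit_vec c} + card ((\<lambda>j. (\<lambda>k. unit_vec c k + unit_vec j k)) ` {..<n})
        + card ((\<lambda>i. (\<lambda>k. unit_vec i k + unit_vec c k)) ` {..<n})"
    by (meson add_le_mono card_Un_le le_trans order_refl)
  also have "\<dots> \<le> 1 + n + n"
    using card_image_le[of "{..<n}" "(\<lambda>j. (\<lambda>k. unit_vec c k + unit_vec j k))"]
      card_image_le[of "{..<n}" "(\<lambda>i. (\<lambda>k. unit_vec i k + unit_vec c k))"] by simp
  finally show ?thesis by simp
qed

lemma fin_Av: "finite (Av n c)"
  unfolding Av_def using fin_C0 by simp

lemma card_Av_inter: "c \<noteq> d \<Longrightarrow> card (Av n c \<inter> Av n d) \<le> 1"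
proof -
  assume cd: "c \<noteq> d"
  have "Av n c \<inter> Av n d \<subseteq> {\<lambda>k. unit_vec c k + unit_vec d k}"
  proof
    fix y assume "y \<in> Av n c \<inter> Av n d"
    then have y: "y \<in> C0 n" "y c \<noteq> 0" "y d \<noteq> 0" unfolding Av_def by auto
    have uv: "\<And>i x. unit_vec i x \<noteq> 0 \<Longrightarrow> i = x" unfolding unit_vec_def by (auto split: if_splits)
    consider "y = (\<lambda>_. 0)" | i where "i < n" "y = unit_vec i"
      | i j where "i \<le> j" "j < n" "y = (\<lambda>k. unit_vec i k + unit_vec j k)"
      using C0_cases[OF y(1)] by blast
    then show "y \<in> {\<lambda>k. unit_vec c k + unit_vec d k}"
    proof cases
      case 1 then show ?thesis using y(2) by simp
    next
      case (2 i)
      then have "i = c" "i = d" using y(2,3) uv by simp_all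
      then show ?thesis using cd by simp
    next
      case (3 i j)
      then have "unit_vec i c \<noteq> 0 \<or> unit_vec j c \<noteq> 0" "unit_vec i d \<noteq> 0 \<or> unit_vec j d \<noteq> 0"
        using y(2,3) by simp_all
      then have "(i = c \<or> j = c) \<and> (i = d \<or> j = d)" using uv by blast
      then have "(i = c \<and> j = d) \<or> (i = d \<and> j = c)" using cd by blast
      then show ?thesis using 3 by (auto simp: add.commute)
    qed
  qed
  from card_mono[OF _ this] show ?thesis by simp
qed

lemma card_pairs_le:
  assumes "finite A"
  shows "card ((\<lambda>(a,b). {a,b}) ` A) \<le> card A"
  using card_image_le[OF assms] by blast

lemma card_Mid: "c \<noteq> d \<Longrightarrow> card (Mid n c d) \<le> 10 * (n+1)^2"
proof -
  assume cd: "c \<noteq> d"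
  let ?I = "Av n c \<inter> Av n d"
  let ?A = "?I \<times> C0 n \<union> C0 n \<times> ?I \<union> Av n c \<times> Av n d \<union> Av n d \<times> Av n c"
  have sub: "Mid n c d \<subseteq> (\<lambda>(a,b). {a,b}) ` ?A"
  proof
    fix e assume "e \<in> Mid n c d"
    then have e: "e \<in> possible_edges n" "c \<in> Dset e" "d \<in> Dset e" unfolding Mid_def by auto
    from e(1) obtain y y' where yy: "e = {y, y'}" "y \<in> C0 n" "y' \<in> C0 n" "y \<noteq> y'" by (rule PE_elem)
    have "y c \<noteq> y' c" "y d \<noteq> y' d" using e(2,3) yy(1) by (auto simp: Dset_pair)
    then have "(y \<in> Av n c \<or> y' \<in> Av n c) \<and> (y \<in> Av n d \<or> y' \<in> Av n d)"
      using yy unfolding Av_def by auto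
    then have "(y, y') \<in> ?A" using yy by auto
    then show "e \<in> (\<lambda>(a,b). {a,b}) ` ?A" using yy(1) by force
  qed
  have fA: "finite ?A" using fin_Av fin_C0 by simp
  have "card (Mid n c d) \<le> card ?A"
    using card_mono[OF _ sub] card_pairs_le[OF fA] fA by (meson finite_imageI le_trans)
  also have "\<dots> \<le> card (?I \<times> C0 n) + card (C0 n \<times> ?I) + card (Av n c \<times> Av n d) + card (Av n d \<times> Av n c)"
    by (meson add_le_mono card_Un_le le_trans order_refl)
  also have "\<dots> \<le> (n+1)^2 + (n+1)^2 + (2*n+1)*(2*n+1) + (2*n+1)*(2*n+1)"
  proof -
    have a: "card ?I \<le> 1" by (rule card_Av_inter[OF cd])
    have b: "card (C0 n) \<le> (n+1)^2" by (rule card_C0)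
    have "card (?I \<times> C0 n) \<le> (n+1)^2" unfolding card_cartesian_product using a b
      by (metis dual_order.trans mult_le_mono mult_1)
    moreover have "card (C0 n \<times> ?I) \<le> (n+1)^2" unfolding card_cartesian_product using a b
      by (metis dual_order.trans mult_le_mono mult_1_right)
    moreover have "card (Av n c \<times> Av n d) \<le> (2*n+1)*(2*n+1)" unfolding card_cartesian_product
      using card_Av[of n c] card_Av[of n d] by (rule mult_le_mono)
    moreover have "card (Av n d \<times> Av n c) \<le> (2*n+1)*(2*n+1)" unfolding card_cartesian_product
      using card_Av[of n d] card_Av[of n c] by (rule mult_le_mono)
    ultimately show ?thesis by linarith
  qed
  also have "\<dots> \<le> 10 * (n+1)^2" by (simp add: power2_eq_square algebra_simps)
  finally show ?thesis .
qed

lemma card_Leaf: "card (Leaf n c) \<le> 3 * (n+1)^2"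
proof -
  let ?A = "C0 n \<times> {..2::nat}"
  have sub: "Leaf n c \<subseteq> (\<lambda>(a,j). {a, a(c := j)}) ` ?A"
  proof
    fix e assume "e \<in> Leaf n c"
    then have e: "e \<in> possible_edges n" "Dset e \<subseteq> {c}" unfolding Leaf_def by auto
    from e(1) obtain y y' where yy: "e = {y, y'}" "y \<in> C0 n" "y' \<in> C0 n" "y \<noteq> y'" by (rule PE_elem)
    have "\<forall>i. i \<noteq> c \<longrightarrow> y i = y' i" using e(2) yy(1) by (auto simp: Dset_pair)
    then have "y' = y(c := y' c)" by auto
    moreover have "y' c \<le> 2" using C0_le2[OF yy(3)] .
    ultimately show "e \<in> (\<lambda>(a,j). {a, a(c := j)}) ` ?A" using yy(1,2)
      by (metis (no_types, lifting) SigmaI atMost_iff case_prod_conv image_eqI)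
  qed
  have fA: "finite ?A" using fin_C0 by simp
  have "card (Leaf n c) \<le> card ?A"
    using card_mono[OF _ sub] card_image_le[OF fA, of "(\<lambda>(a,j). {a, a(c := j)})"] fA
    by (meson finite_imageI le_trans)
  also have "\<dots> = card (C0 n) * 3" by (simp add: card_cartesian_product)
  also have "\<dots> \<le> 3 * (n+1)^2" using card_C0[of n] by simp
  finally show ?thesis .
qed

lemma fin_Mid: "finite (Mid n c d)" unfolding Mid_def using fin_PE by simp
lemma fin_Leaf: "finite (Leaf n c)" unfolding Leaf_def using fin_PE by simp

definition is_path :: "('e \<Rightarrow> nat set) \<Rightarrow> 'e set \<Rightarrow> nat \<Rightarrow> (nat \<Rightarrow> 'e) \<Rightarrow> (nat \<Rightarrow> nat) \<Rightarrow> bool" where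
  "is_path S R k es cs \<longleftrightarrow> 1 \<le> k \<and> inj_on es {..<k} \<and> es ` {..<k} \<subseteq> R \<and> inj_on cs {..<k-1} \<and>
     (\<forall>i. Suc i < k \<longrightarrow> cs i \<in> S (es i) \<and> cs i \<in> S (es (Suc i)))"

definition prv :: "nat \<Rightarrow> nat \<Rightarrow> nat" where
  "prv k i = (if i = 0 then k - 1 else i - 1)"

definition is_cycle :: "('e \<Rightarrow> nat set) \<Rightarrow> 'e set \<Rightarrow> nat \<Rightarrow> (nat \<Rightarrow> 'e) \<Rightarrow> (nat \<Rightarrow> nat) \<Rightarrow> bool" where
  "is_cycle S R k es cs \<longleftrightarrow> 2 \<le> k \<and> inj_on es {..<k} \<and> es ` {..<k} \<subseteq> R \<and> inj_on cs {..<k} \<and>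
     (\<forall>i<k. cs i \<in> S (es i) \<and> cs (prv k i) \<in> S (es i))"

definition is_lpath :: "('e \<Rightarrow> nat set) \<Rightarrow> 'e set \<Rightarrow> nat \<Rightarrow> (nat \<Rightarrow> 'e) \<Rightarrow> (nat \<Rightarrow> nat) \<Rightarrow> bool" where
  "is_lpath S R k es cs \<longleftrightarrow> 2 \<le> k \<and> is_path S R k es cs \<and> S (es 0) \<subseteq> {cs 0} \<and> S (es (k-1)) \<subseteq> {cs (k-2)}"

lemma path_le:
  assumes "is_path S R k es cs" "finite R"
  shows "k \<le> card R"
proof -
  have "card (es ` {..<k}) = k" using assms(1) unfolding is_path_def by (simp add: card_image)
  moreover have "card (es ` {..<k}) \<le> card R" using assms unfolding is_path_def by (simp add: card_mono)
  ultimately show ?thesis by simp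
qed

lemma seg_cycle:
  assumes P: "is_path S R k es cs" and ab: "a < b" "b < k"
    and c: "c \<in> S (es b)" "c \<in> S (es a)" "c \<notin> cs ` {a..<b}"
  shows "is_cycle S R (b - a + 1) (\<lambda>i. es (a + i)) (\<lambda>i. if i < b - a then cs (a + i) else c)"
proof -
  let ?k = "b - a + 1"
  let ?es = "\<lambda>i. es (a + i)"
  let ?cs = "\<lambda>i. if i < b - a then cs (a + i) else c"
  have injes: "inj_on es {..<k}" and img: "es ` {..<k} \<subseteq> R" and injcs: "inj_on cs {..<k-1}"
    and pc: "\<And>i. Suc i < k \<Longrightarrow> cs i \<in> S (es i) \<and> cs i \<in> S (es (Suc i))"
    using P unfolding is_path_def by auto
  have 1: "inj_on ?es {..<?k}"
  proof (rule inj_onI)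
    fix x y assume "x \<in> {..<?k}" "y \<in> {..<?k}" "es (a + x) = es (a + y)"
    then have "a + x = a + y" using inj_onD[OF injes, of "a+x" "a+y"] ab by auto
    then show "x = y" by simp
  qed
  have 2: "?es ` {..<?k} \<subseteq> R" using img ab by auto
  have 3: "inj_on ?cs {..<?k}"
  proof (rule inj_onI)
    fix x y assume x: "x \<in> {..<?k}" and y: "y \<in> {..<?k}" and e: "?cs x = ?cs y"
    show "x = y"
    proof (cases "x < b - a")
      case xT: True
      show ?thesis
      proof (cases "y < b - a")
        case True
        then have "cs (a + x) = cs (a + y)" using xT e by simp
        then have "a + x = a + y" using inj_onD[OF injcs, of "a+x" "a+y"] xT True ab by auto
        then show ?thesis by simp
      next
        case False
        then have "c = cs (a + x)" using xT e by simp
        moreover have "a + x \<in> {a..<b}" using xT by auto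
        ultimately show ?thesis using c(3) by blast
      qed
    next
      case xF: False
      show ?thesis
      proof (cases "y < b - a")
        case True
        then have "c = cs (a + y)" using xF e by simp
        moreover have "a + y \<in> {a..<b}" using True by auto
        ultimately show ?thesis using c(3) by blast
      next
        case False
        then show ?thesis using xF x y by simp
      qed
    qed
  qed
  have 4: "\<forall>i<?k. ?cs i \<in> S (?es i) \<and> ?cs (prv ?k i) \<in> S (?es i)"
  proof (intro allI impI conjI)
    fix i assume i: "i < ?k"
    show "?cs i \<in> S (?es i)"
    proof (cases "i < b - a")
      case True
      then show ?thesis using pc[of "a + i"] ab by simp
    next
      case False
      then have "a + i = b" using i ab by simp
      then show ?thesis using False c(1) by simp
    qed
    show "?cs (prv ?k i) \<in> S (?es i)"
    proof (cases "i = 0")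
      case True
      then show ?thesis using c(2) by (simp add: prv_def)
    next
      case False
      then have pi: "prv ?k i = i - 1" "i - 1 < b - a" using i by (auto simp: prv_def)
      have "Suc (a + (i - 1)) < k" using i ab False by simp
      moreover have "Suc (a + (i - 1)) = a + i" using False by simp
      ultimately show ?thesis using pc[of "a + (i - 1)"] pi by simp
    qed
  qed
  show ?thesis unfolding is_cycle_def using 1 2 3 4 ab by simp
qed

lemma ext_path:
  assumes P: "is_path S R k es cs" and f: "f \<in> R" "f \<notin> es ` {..<k}"
    and c: "c \<in> S (es (k-1))" "c \<in> S f" "c \<notin> cs ` {..<k-1}"
  shows "is_path S R (Suc k) (es(k := f)) (cs(k-1 := c))"
proof -
  have k: "1 \<le> k" and injes: "inj_on es {..<k}" and img: "es ` {..<k} \<subseteq> R" and injcs: "inj_on cs {..<k-1}"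
    and pc: "\<And>i. Suc i < k \<Longrightarrow> cs i \<in> S (es i) \<and> cs i \<in> S (es (Suc i))"
    using P unfolding is_path_def by auto
  have "{..<Suc k} = insert k {..<k}" by auto
  then have 1: "inj_on (es(k := f)) {..<Suc k}" using injes f(2)
    by (simp add: inj_on_def) (metis image_eqI lessThan_iff)
  have 2: "(es(k := f)) ` {..<Suc k} \<subseteq> R" using img f(1) by (auto simp: less_Suc_eq)
  have "{..<Suc k - 1} = insert (k-1) {..<k-1}" using k by auto
  then have 3: "inj_on (cs(k-1 := c)) {..<Suc k - 1}" using injcs c(3)
    by (simp add: inj_on_def) (metis image_eqI lessThan_iff)
  have 4: "\<forall>i. Suc i < Suc k \<longrightarrow> (cs(k-1 := c)) i \<in> S ((es(k := f)) i) \<and> (cs(k-1 := c)) i \<in> S ((es(k := f)) (Suc i))"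
  proof (intro allI impI)
    fix i assume i: "Suc i < Suc k"
    show "(cs(k-1 := c)) i \<in> S ((es(k := f)) i) \<and> (cs(k-1 := c)) i \<in> S ((es(k := f)) (Suc i))"
    proof (cases "i = k - 1")
      case True
      then show ?thesis using c k by auto
    next
      case False
      then have "Suc i < k" using i by simp
      then show ?thesis using pc[of i] False by simp
    qed
  qed
  show ?thesis unfolding is_path_def using 1 2 3 4 by simp
qed

lemma rev_path:
  assumes P: "is_path S R k es cs"
  shows "is_path S R k (\<lambda>i. es (k - 1 - i)) (\<lambda>i. cs (k - 2 - i))"
proof -
  have k: "1 \<le> k" and injes: "inj_on es {..<k}" and img: "es ` {..<k} \<subseteq> R" and injcs: "inj_on cs {..<k-1}"
    and pc: "\<And>i. Suc i < k \<Longrightarrow> cs i \<in> S (es i) \<and> cs i \<in> S (es (Suc i))"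
    using P unfolding is_path_def by auto
  have 1: "inj_on (\<lambda>i. es (k - 1 - i)) {..<k}"
  proof (rule inj_onI)
    fix x y assume "x \<in> {..<k}" "y \<in> {..<k}" "es (k - 1 - x) = es (k - 1 - y)"
    then have "k - 1 - x = k - 1 - y" using inj_onD[OF injes, of "k-1-x" "k-1-y"] by auto
    then show "x = y" using \<open>x \<in> {..<k}\<close> \<open>y \<in> {..<k}\<close> by simp
  qed
  have 2: "(\<lambda>i. es (k - 1 - i)) ` {..<k} \<subseteq> R" using img k by auto
  have 3: "inj_on (\<lambda>i. cs (k - 2 - i)) {..<k-1}"
  proof (rule inj_onI)
    fix x y assume "x \<in> {..<k-1}" "y \<in> {..<k-1}" "cs (k - 2 - x) = cs (k - 2 - y)"
    then have "k - 2 - x = k - 2 - y" using inj_onD[OF injcs, of "k-2-x" "k-2-y"] by auto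
    then show "x = y" using \<open>x \<in> {..<k-1}\<close> \<open>y \<in> {..<k-1}\<close> by simp
  qed
  have 4: "\<forall>i. Suc i < k \<longrightarrow> cs (k - 2 - i) \<in> S (es (k - 1 - i)) \<and> cs (k - 2 - i) \<in> S (es (k - 1 - Suc i))"
  proof (intro allI impI)
    fix i assume i: "Suc i < k"
    have a: "Suc (k - 2 - i) < k" using i by simp
    have b: "Suc (k - 2 - i) = k - 1 - i" "k - 2 - i = k - 1 - Suc i" using i by simp_all
    show "cs (k - 2 - i) \<in> S (es (k - 1 - i)) \<and> cs (k - 2 - i) \<in> S (es (k - 1 - Suc i))"
      using pc[OF a] b by simp
  qed
  show ?thesis unfolding is_path_def using k 1 2 3 4 by simp
qed

lemma end_leaf:
  assumes P: "is_path S R k es cs" and k: "2 \<le> k"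
    and max: "\<And>es' cs'. \<not> is_path S R (Suc k) es' cs'"
    and deg: "\<And>e c. e \<in> R \<Longrightarrow> c \<in> S e \<Longrightarrow> \<exists>f\<in>R. f \<noteq> e \<and> c \<in> S f"
    and nocyc: "\<And>k es cs. \<not> is_cycle S R k es cs"
  shows "S (es (k-1)) \<subseteq> {cs (k-2)}"
proof
  fix c assume c: "c \<in> S (es (k-1))"
  have img: "es ` {..<k} \<subseteq> R" and injes: "inj_on es {..<k}" and injcs: "inj_on cs {..<k-1}"
    and pc: "\<And>i. Suc i < k \<Longrightarrow> cs i \<in> S (es i) \<and> cs i \<in> S (es (Suc i))"
    using P unfolding is_path_def by auto
  have ek: "es (k-1) \<in> R" using img k by auto
  show "c \<in> {cs (k-2)}"
  proof (rule ccontr)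
    assume nc: "c \<notin> {cs (k-2)}"
    obtain f where f: "f \<in> R" "f \<noteq> es (k-1)" "c \<in> S f" using deg[OF ek c] by blast
    show False
    proof (cases "c \<in> cs ` {..<k-1}")
      case True
      then obtain j where j: "j < k - 1" "c = cs j" by auto
      have "j \<noteq> k - 2" using nc j by auto
      then have jk: "Suc j < k - 1" using j by simp
      have "c \<in> S (es (Suc j))" using pc[of j] j by simp
      moreover have "c \<notin> cs ` {Suc j..<k-1}"
      proof
        assume "c \<in> cs ` {Suc j..<k-1}"
        then obtain i where i: "i \<in> {Suc j..<k-1}" "cs i = cs j" using j by auto
        then have "i = j" using inj_onD[OF injcs, of i j] j by auto
        then show False using i by simp
      qed
      ultimately show False using seg_cycle[OF P jk, of c] c k nocyc by simp
    next
      case False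
      show False
      proof (cases "f \<in> es ` {..<k}")
        case True
        then obtain j where j: "j < k" "f = es j" by auto
        then have jk: "j < k - 1" using f(2) by (cases "j = k - 1") auto
        have "c \<notin> cs ` {j..<k-1}" using False by auto
        then show False using seg_cycle[OF P jk, of c] c k f j nocyc by simp
      next
        case fT: False
        show False using ext_path[OF P f(1) fT c f(3) False] max by blast
      qed
    qed
  qed
qed

lemma comb_main:
  assumes fin: "finite R" and ne: "R \<noteq> {}" and nemp: "\<And>e. e \<in> R \<Longrightarrow> S e \<noteq> {}"
    and deg: "\<And>e c. e \<in> R \<Longrightarrow> c \<in> S e \<Longrightarrow> \<exists>f\<in>R. f \<noteq> e \<and> c \<in> S f"
  shows "(\<exists>k es cs. is_cycle S R k es cs) \<or> (\<exists>k es cs. is_lpath S R k es cs)"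
proof (rule ccontr)
  assume H: "\<not> ?thesis"
  then have nocyc: "\<And>k es cs. \<not> is_cycle S R k es cs" by blast
  let ?P = "{k. \<exists>es cs. is_path S R k es cs}"
  have "?P \<subseteq> {..card R}" using path_le[OF _ fin] by blast
  then have finP: "finite ?P" using finite_subset by blast
  obtain e where e: "e \<in> R" using ne by blast
  obtain c where c: "c \<in> S e" using nemp[OF e] by blast
  obtain f where f: "f \<in> R" "f \<noteq> e" "c \<in> S f" using deg[OF e c] by blast
  have "is_path S R 2 (\<lambda>i. if i = 0 then e else f) (\<lambda>_. c)"
    unfolding is_path_def using e f c
    by (auto simp: inj_on_def lessThan_def less_Suc_eq numeral_2_eq_2)
  then have twoP: "2 \<in> ?P" by blast
  define K where "K = Max ?P"
  have KP: "K \<in> ?P" unfolding K_def using finP twoP by (intro Max_in) auto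
  have K2: "2 \<le> K" unfolding K_def using finP twoP by (simp add: Max_ge)
  have max: "\<And>es' cs'. \<not> is_path S R (Suc K) es' cs'"
  proof
    fix es' cs' assume "is_path S R (Suc K) es' cs'"
    then have "Suc K \<in> ?P" by blast
    then have "Suc K \<le> K" unfolding K_def using finP by (simp add: Max_ge)
    then show False by simp
  qed
  obtain es cs where P: "is_path S R K es cs" using KP by blast
  have A: "S (es (K-1)) \<subseteq> {cs (K-2)}" by (rule end_leaf[OF P K2 max deg nocyc])
  have B: "S (es (K - 1 - (K - 1))) \<subseteq> {cs (K - 2 - (K - 2))}"
    by (rule end_leaf[OF rev_path[OF P] K2 max deg nocyc])
  have "is_lpath S R K es cs" unfolding is_lpath_def using K2 P A B by simp
  then show False using H by blast
qed

lemma cycle_mono: "is_cycle S R k es cs \<Longrightarrow> R \<subseteq> R' \<Longrightarrow> is_cycle S R' k es cs"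
  unfolding is_cycle_def by blast

lemma lpath_mono: "is_lpath S R k es cs \<Longrightarrow> R \<subseteq> R' \<Longrightarrow> is_lpath S R' k es cs"
  unfolding is_lpath_def is_path_def by blast

lemma indep_main:
  fixes w :: "complex set \<Rightarrow> nat \<Rightarrow> real"
  assumes E: "E \<subseteq> possible_edges n"
    and nocyc: "\<And>k es cs. \<not> is_cycle Dset E k es cs"
    and nolp: "\<And>k es cs. \<not> is_lpath Dset E k es cs"
    and w: "\<And>e i. e \<in> E \<Longrightarrow> w e i \<noteq> 0 \<longleftrightarrow> i \<in> Dset e"
    and rel: "\<And>i. (\<Sum>e\<in>E. a e * w e i) = 0"
  shows "\<forall>e\<in>E. a e = 0"
proof (rule ccontr)
  assume "\<not> (\<forall>e\<in>E. a e = 0)"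
  then have ne: "{e\<in>E. a e \<noteq> 0} \<noteq> {}" by blast
  have finE: "finite E" using E fin_PE finite_subset by blast
  let ?R = "{e\<in>E. a e \<noteq> 0}"
  have "(\<exists>k es cs. is_cycle Dset ?R k es cs) \<or> (\<exists>k es cs. is_lpath Dset ?R k es cs)"
  proof (rule comb_main)
    show "finite ?R" using finE by simp
    show "?R \<noteq> {}" by (rule ne)
    show "\<And>e. e \<in> ?R \<Longrightarrow> Dset e \<noteq> {}" using E Dset_ne by blast
    show "\<exists>f\<in>?R. f \<noteq> e \<and> c \<in> Dset f" if e: "e \<in> ?R" and c: "c \<in> Dset e" for e c
    proof (rule ccontr)
      assume H: "\<not> (\<exists>f\<in>?R. f \<noteq> e \<and> c \<in> Dset f)"
      have eE: "e \<in> E" using e by simp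
      have "(\<Sum>f\<in>E. a f * w f c) = a e * w e c + (\<Sum>f\<in>E - {e}. a f * w f c)"
        using finE eE by (simp add: sum.remove)
      also have "(\<Sum>f\<in>E - {e}. a f * w f c) = 0"
      proof (rule sum.neutral, rule ballI)
        fix f assume f: "f \<in> E - {e}"
        show "a f * w f c = 0"
        proof (cases "a f = 0")
          case False
          then have "c \<notin> Dset f" using H f by blast
          then have "w f c = 0" using w f by blast
          then show ?thesis by simp
        qed simp
      qed
      finally have "a e * w e c = 0" using rel[of c] by simp
      moreover have "w e c \<noteq> 0" using w eE c by blast
      ultimately show False using e by simp
    qed
  qed
  moreover have RE: "?R \<subseteq> E" by blast
  ultimately show False
  proof (elim disjE exE)
    fix k es cs assume "is_cycle Dset ?R k es cs"
    from cycle_mono[OF this RE] nocyc show False by blast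
  next
    fix k es cs assume "is_lpath Dset ?R k es cs"
    from lpath_mono[OF this RE] nolp show False by blast
  qed
qed

definition ofst :: "complex set \<Rightarrow> complex" where
  "ofst e = (SOME y. y \<in> e)"

definition osnd :: "complex set \<Rightarrow> complex" where
  "osnd e = (SOME y'. y' \<in> e \<and> y' \<noteq> ofst e)"

lemma orient:
  assumes "e \<in> possible_edges n"
  shows "e = {ofst e, osnd e}" "ofst e \<noteq> osnd e"
proof -
  obtain y y' where yy: "e = {y, y'}" "y \<noteq> y'" using assms by (rule PE_elem)
  have a: "ofst e \<in> e" unfolding ofst_def using yy by (metis insertI1 someI_ex)
  have "\<exists>y'. y' \<in> e \<and> y' \<noteq> ofst e" using yy a by auto
  then have b: "osnd e \<in> e \<and> osnd e \<noteq> ofst e" unfolding osnd_def by (rule someI_ex)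
  show "e = {ofst e, osnd e}" using a b yy by auto
  show "ofst e \<noteq> osnd e" using b by metis
qed

definition wv :: "complex set \<Rightarrow> nat \<Rightarrow> real" where
  "wv e = reaction_vec (ofst e) (osnd e)"

lemma wv_nz: "e \<in> possible_edges n \<Longrightarrow> wv e i \<noteq> 0 \<longleftrightarrow> i \<in> Dset e"
proof -
  assume e: "e \<in> possible_edges n"
  have "Dset e = {i. ofst e i \<noteq> osnd e i}" using Dset_pair[of "ofst e" "osnd e"] orient(1)[OF e] by simp
  then show ?thesis unfolding wv_def reaction_vec_def by (cases "ofst e i = osnd e i") simp_all
qed

lemma linkage_class:
  assumes disj: "\<And>e f. e \<in> E \<Longrightarrow> f \<in> E \<Longrightarrow> e \<noteq> f \<Longrightarrow> e \<inter> f = {}"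
    and yz: "(y, z) \<in> (network_of E \<union> (network_of E)\<inverse>)\<^sup>*" and ye: "y \<in> e" and eE: "e \<in> E"
  shows "z \<in> e"
  using yz
proof (induction rule: rtrancl_induct)
  case base
  then show ?case using ye .
next
  case (step u v)
  then have "{u, v} \<in> E" unfolding network_of_def by (auto simp: insert_commute)
  moreover have "u \<in> {u, v} \<inter> e" using step by simp
  ultimately have "{u, v} = e" using disj eE by blast
  then show ?case by blast
qed

lemma deficiency_zero:
  assumes E: "E \<subseteq> possible_edges n"
    and disj: "\<And>e f. e \<in> E \<Longrightarrow> f \<in> E \<Longrightarrow> e \<noteq> f \<Longrightarrow> e \<inter> f = {}"
    and nocyc: "\<And>k es cs. \<not> is_cycle Dset E k es cs"
    and nolp: "\<And>k es cs. \<not> is_lpath Dset E k es cs"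
  shows "deficiency (network_of E) = 0"
proof -
  let ?R = "network_of E"
  have finE: "finite E" using E fin_PE finite_subset by blast
  have or1: "\<And>e. e \<in> E \<Longrightarrow> {ofst e, osnd e} = e"
    by (rule sym, rule orient(1)[OF subsetD[OF E]])
  have or2: "\<And>e. e \<in> E \<Longrightarrow> ofst e \<noteq> osnd e"
    by (rule orient(2)[OF subsetD[OF E]])
  have inR: "\<And>e. e \<in> E \<Longrightarrow> (ofst e, osnd e) \<in> ?R \<and> (osnd e, ofst e) \<in> ?R"
  proof -
    fix e assume e: "e \<in> E"
    have "{ofst e, osnd e} \<in> E" "{osnd e, ofst e} \<in> E" using or1[OF e] e by (simp_all add: insert_commute)
    then show "(ofst e, osnd e) \<in> ?R \<and> (osnd e, ofst e) \<in> ?R" unfolding network_of_def using or2[OF e] by auto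
  qed
  have compl: "complexes ?R = \<Union>E"
  proof
    show "complexes ?R \<subseteq> \<Union>E" unfolding complexes_def network_of_def by auto
    show "\<Union>E \<subseteq> complexes ?R"
    proof
      fix y assume "y \<in> \<Union>E"
      then obtain e where e: "e \<in> E" "y \<in> e" by blast
      then have "y = ofst e \<or> y = osnd e" using or1[OF e(1)] by blast
      then show "y \<in> complexes ?R" using inR[OF e(1)] unfolding complexes_def by force
    qed
  qed
  have card2: "\<And>e. e \<in> E \<Longrightarrow> card e = 2"
  proof -
    fix e assume e: "e \<in> E"
    have "card {ofst e, osnd e} = 2" using or2[OF e] by simp
    then show "card e = 2" using or1[OF e] by simp
  qed
  have c1: "card (complexes ?R) = 2 * card E"
  proof -
    have "pairwise disjnt E" using disj unfolding pairwise_def disjnt_def by blast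
    moreover have "\<And>A. A \<in> E \<Longrightarrow> finite A" using card2 by (metis card.infinite zero_neq_numeral)
    ultimately have "card (\<Union>E) = sum card E" by (rule card_Union_disjoint)
    also have "\<dots> = sum (\<lambda>_. 2) E" using card2 by simp
    finally show ?thesis using compl by simp
  qed
  have c2: "num_linkage_classes ?R = card E"
  proof -
    let ?Rel = "(?R \<union> ?R\<inverse>)\<^sup>* \<inter> (complexes ?R \<times> complexes ?R)"
    have cls: "?Rel `` {y} = e" if e: "e \<in> E" "y \<in> e" for e y
    proof
      show "?Rel `` {y} \<subseteq> e" using linkage_class[OF disj _ e(2) e(1)] by blast
      show "e \<subseteq> ?Rel `` {y}"
      proof
        fix z assume z: "z \<in> e"
        have yC: "y \<in> complexes ?R" "z \<in> complexes ?R" using compl e z by auto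
        have "(y, z) \<in> (?R \<union> ?R\<inverse>)\<^sup>*"
        proof (cases "y = z")
          case False
          have "y = ofst e \<or> y = osnd e" "z = ofst e \<or> z = osnd e" using or1[OF e(1)] e(2) z by blast+
          then have "(y, z) \<in> ?R" using inR[OF e(1)] False by auto
          then show ?thesis by blast
        qed simp
        then show "z \<in> ?Rel `` {y}" using yC by blast
      qed
    qed
    have "complexes ?R // ?Rel = E"
    proof
      show "complexes ?R // ?Rel \<subseteq> E"
      proof
        fix X assume "X \<in> complexes ?R // ?Rel"
        then obtain y where y: "y \<in> complexes ?R" "X = ?Rel `` {y}" unfolding quotient_def by blast
        then obtain e where e: "e \<in> E" "y \<in> e" using compl by blast
        then show "X \<in> E" using cls y by simp
      qed
      show "E \<subseteq> complexes ?R // ?Rel"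
      proof
        fix e assume e: "e \<in> E"
        have "ofst e \<in> e" using or1[OF e] by blast
        then have "?Rel `` {ofst e} = e" "ofst e \<in> complexes ?R" using cls e compl by auto
        then show "e \<in> complexes ?R // ?Rel" unfolding quotient_def by blast
      qed
    qed
    then show ?thesis unfolding num_linkage_classes_def by simp
  qed
  let ?D = "{reaction_vec y y' | y y'. (y, y') \<in> ?R}"
  have wnz: "\<And>e i. e \<in> E \<Longrightarrow> wv e i \<noteq> 0 \<longleftrightarrow> i \<in> Dset e" using wv_nz E by blast
  have ind: "\<And>a. (\<And>i. (\<Sum>e\<in>E. a e * wv e i) = 0) \<Longrightarrow> \<forall>e\<in>E. a e = 0"
    using indep_main[OF E nocyc nolp wnz] by blast
  have Dform: "\<And>v. v \<in> ?D \<Longrightarrow> \<exists>e\<in>E. v = wv e \<or> v = - wv e"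
  proof -
    fix v assume "v \<in> ?D"
    then obtain y y' where yy: "v = reaction_vec y y'" "{y, y'} \<in> E" "y \<noteq> y'"
      unfolding network_of_def by blast
    let ?e = "{y, y'}"
    have "(ofst ?e = y \<and> osnd ?e = y') \<or> (ofst ?e = y' \<and> osnd ?e = y)"
      using or1[OF yy(2)] unfolding doubleton_eq_iff by blast
    then have "v = wv ?e \<or> v = - wv ?e" unfolding wv_def yy(1) reaction_vec_def by auto
    then show "\<exists>e\<in>E. v = wv e \<or> v = - wv e" using yy(2) by blast
  qed
  have wD: "\<And>e. e \<in> E \<Longrightarrow> wv e \<in> ?D" unfolding wv_def using inR by blast
  have finD: "finite ?D"
  proof -
    have "?D \<subseteq> wv ` E \<union> (\<lambda>e. - wv e) ` E" using Dform by blast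
    then show ?thesis using finE finite_subset by blast
  qed
  have injw: "inj_on wv E"
  proof (rule inj_onI, rule ccontr)
    fix e f assume e: "e \<in> E" and f: "f \<in> E" and eq: "wv e = wv f" and ne: "e \<noteq> f"
    define a where "a = (\<lambda>g. if g = e then (1::real) else if g = f then -1 else 0)"
    have "\<And>i. (\<Sum>g\<in>E. a g * wv g i) = 0"
    proof -
      fix i
      have "(\<Sum>g\<in>E. a g * wv g i) = (\<Sum>g\<in>{e, f}. a g * wv g i)"
        by (rule sum.mono_neutral_right) (use finE e f in \<open>auto simp: a_def\<close>)
      also have "\<dots> = wv e i - wv f i" using ne by (simp add: a_def)
      finally show "(\<Sum>g\<in>E. a g * wv g i) = 0" using eq by simp
    qed
    then have "a e = 0" using ind e by blast
    then show False by (simp add: a_def)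
  qed
  have low: "card E \<in> card ` {B. B \<subseteq> ?D \<and> lin_indep B}"
  proof -
    have li: "lin_indep (wv ` E)" unfolding lin_indep_def
    proof (intro conjI allI impI ballI)
      show "finite (wv ` E)" using finE by simp
      fix c v assume H: "\<forall>i. (\<Sum>v\<in>wv ` E. c v * v i) = 0" and v: "v \<in> wv ` E"
      have "\<And>i. (\<Sum>e\<in>E. c (wv e) * wv e i) = 0"
        using H injw by (simp add: sum.reindex)
      then have "\<forall>e\<in>E. c (wv e) = 0" by (rule ind)
      then show "c v = 0" using v by blast
    qed
    have sub: "wv ` E \<subseteq> ?D" using wD by blast
    have cw: "card (wv ` E) = card E" using injw by (simp add: card_image)
    have "wv ` E \<in> {B. B \<subseteq> ?D \<and> lin_indep B}" unfolding mem_Collect_eq using sub li by (rule conjI)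
    then have "card (wv ` E) \<in> card ` {B. B \<subseteq> ?D \<and> lin_indep B}" by (rule imageI)
    then show ?thesis unfolding cw .
  qed
  have up: "x \<le> card E" if x: "x \<in> card ` {B. B \<subseteq> ?D \<and> lin_indep B}" for x
  proof -
    obtain B where B: "B \<subseteq> ?D" "lin_indep B" "x = card B" using x by blast
    have finB: "finite B" using B(2) unfolding lin_indep_def by (rule conjunct1)
    define h where "h = (\<lambda>v. SOME e. e \<in> E \<and> (v = wv e \<or> v = - wv e))"
    have hp: "\<And>v. v \<in> B \<Longrightarrow> h v \<in> E \<and> (v = wv (h v) \<or> v = - wv (h v))"
    proof -
      fix v assume "v \<in> B"
      then have "v \<in> ?D" by (rule subsetD[OF B(1)])
      then have "\<exists>e. e \<in> E \<and> (v = wv e \<or> v = - wv e)" using Dform by blast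
      then show "h v \<in> E \<and> (v = wv (h v) \<or> v = - wv (h v))" unfolding h_def by (rule someI_ex)
    qed
    have "inj_on h B"
    proof (rule inj_onI, rule ccontr)
      fix v1 v2 assume v1: "v1 \<in> B" and v2: "v2 \<in> B" and eq: "h v1 = h v2" and ne: "v1 \<noteq> v2"
      have neg: "v2 = - v1" using hp[OF v1] hp[OF v2] eq ne by auto
      define c where "c = (\<lambda>u. if u = v1 \<or> u = v2 then (1::real) else 0)"
      have "\<forall>i. (\<Sum>u\<in>B. c u * u i) = 0"
      proof
        fix i
        have "(\<Sum>u\<in>B. c u * u i) = (\<Sum>u\<in>{v1, v2}. c u * u i)"
          by (rule sum.mono_neutral_right) (use finB v1 v2 in \<open>auto simp: c_def\<close>)
        also have "\<dots> = v1 i + v2 i" using ne by (simp add: c_def)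
        finally show "(\<Sum>u\<in>B. c u * u i) = 0" using neg by simp
      qed
      then have "c v1 = 0" using B(2) v1 unfolding lin_indep_def by blast
      then show False by (simp add: c_def)
    qed
    then have "card B = card (h ` B)" by (simp add: card_image)
    also have "\<dots> \<le> card E" using hp finE by (intro card_mono) auto
    finally show ?thesis using B(3) by simp
  qed
  have c3: "stoich_dim ?R = card E"
  proof -
    have "finite (card ` {B. B \<subseteq> ?D \<and> lin_indep B})" using finD by simp
    then have "Max (card ` {B. B \<subseteq> ?D \<and> lin_indep B}) = card E"
      using up low by (intro Max_eqI) auto
    then show ?thesis unfolding stoich_dim_def span_dim_def by simp
  qed
  show ?thesis unfolding deficiency_def using c1 c2 c3 by simp
qed

definition CS :: "nat \<Rightarrow> nat \<Rightarrow> (nat \<Rightarrow> nat) set" where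
  "CS n k = {cs \<in> PiE {..<k} (\<lambda>_. {..<n}). inj_on cs {..<k}}"

definition Tc :: "nat \<Rightarrow> nat \<Rightarrow> ((nat \<Rightarrow> nat) \<times> (nat \<Rightarrow> complex set)) set" where
  "Tc n k = {(cs, es). cs \<in> CS n k \<and> es \<in> PiE {..<k} (\<lambda>i. Mid n (cs (prv k i)) (cs i)) \<and> inj_on es {..<k}}"

definition Bp :: "nat \<Rightarrow> nat \<Rightarrow> (nat \<Rightarrow> nat) \<Rightarrow> nat \<Rightarrow> complex set set" where
  "Bp n k cs i = (if i = 0 then Leaf n (cs 0) else if i = k - 1 then Leaf n (cs (k - 2))
      else Mid n (cs (i - 1)) (cs i))"

definition Tp :: "nat \<Rightarrow> nat \<Rightarrow> ((nat \<Rightarrow> nat) \<times> (nat \<Rightarrow> complex set)) set" where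
  "Tp n k = {(cs, es). cs \<in> CS n (k - 1) \<and> es \<in> PiE {..<k} (Bp n k cs) \<and> inj_on es {..<k}}"

lemma fin_CS: "finite (CS n k)"
  unfolding CS_def by (rule finite_subset[of _ "PiE {..<k} (\<lambda>_. {..<n})"]) (auto intro: finite_PiE)

lemma card_CS: "card (CS n k) \<le> n ^ k"
proof -
  have "card (CS n k) \<le> card (PiE {..<k} (\<lambda>_. {..<n}))"
    unfolding CS_def by (rule card_mono) (auto intro: finite_PiE)
  also have "\<dots> = n ^ k" by (simp add: card_PiE)
  finally show ?thesis .
qed

lemma card_Sigma_bound:
  assumes fA: "finite A" and fB: "\<And>a i. a \<in> A \<Longrightarrow> i < k \<Longrightarrow> finite (B a i)"
    and cB: "\<And>a i. a \<in> A \<Longrightarrow> i < k \<Longrightarrow> card (B a i) \<le> b"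
    and T: "T \<subseteq> Sigma A (\<lambda>a. PiE {..<k} (B a))"
  shows "finite T \<and> card T \<le> card A * b ^ k"
proof -
  have fP: "\<And>a. a \<in> A \<Longrightarrow> finite (PiE {..<k} (B a))" using fB by (intro finite_PiE) auto
  have fS: "finite (Sigma A (\<lambda>a. PiE {..<k} (B a)))" using fA fP by (intro finite_SigmaI) auto
  have "card T \<le> card (Sigma A (\<lambda>a. PiE {..<k} (B a)))" using fS T by (rule card_mono)
  also have "\<dots> = (\<Sum>a\<in>A. card (PiE {..<k} (B a)))" using fA fP by simp
  also have "\<dots> = (\<Sum>a\<in>A. \<Prod>i<k. card (B a i))" by (simp add: card_PiE)
  also have "\<dots> \<le> (\<Sum>a\<in>A. \<Prod>i<k. b)"
    by (rule sum_mono, rule prod_mono) (use cB in auto)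
  also have "\<dots> = card A * b ^ k" by simp
  finally show ?thesis using finite_subset[OF T fS] by simp
qed

lemma prv_lt: "2 \<le> k \<Longrightarrow> i < k \<Longrightarrow> prv k i < k \<and> prv k i \<noteq> i"
  unfolding prv_def by auto

lemma card_Tc:
  assumes k: "2 \<le> k"
  shows "finite (Tc n k) \<and> card (Tc n k) \<le> n ^ k * (10 * (n+1)^2) ^ k"
proof -
  have "finite (Tc n k) \<and> card (Tc n k) \<le> card (CS n k) * (10 * (n+1)^2) ^ k"
  proof (rule card_Sigma_bound[OF fin_CS])
    show "finite (Mid n (cs (prv k i)) (cs i))" for cs i by (rule fin_Mid)
    show "card (Mid n (cs (prv k i)) (cs i)) \<le> 10 * (n+1)^2" if cs: "cs \<in> CS n k" and i: "i < k" for cs i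
    proof (rule card_Mid)
      have inj: "inj_on cs {..<k}" using cs unfolding CS_def by simp
      show "cs (prv k i) \<noteq> cs i" using prv_lt[OF k i] inj i inj_onD[OF inj, of "prv k i" i] by auto
    qed
    show "Tc n k \<subseteq> Sigma (CS n k) (\<lambda>cs. PiE {..<k} (\<lambda>i. Mid n (cs (prv k i)) (cs i)))"
      unfolding Tc_def by auto
  qed
  then show ?thesis using card_CS[of n k] by (meson le_trans mult_le_mono1)
qed

lemma card_Tp:
  assumes k: "2 \<le> k"
  shows "finite (Tp n k) \<and> card (Tp n k) \<le> n ^ (k - 1) * (10 * (n+1)^2) ^ k"
proof -
  have "finite (Tp n k) \<and> card (Tp n k) \<le> card (CS n (k - 1)) * (10 * (n+1)^2) ^ k"
  proof (rule card_Sigma_bound[OF fin_CS])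
    show "finite (Bp n k cs i)" for cs i unfolding Bp_def by (simp add: fin_Mid fin_Leaf)
    show "card (Bp n k cs i) \<le> 10 * (n+1)^2" if cs: "cs \<in> CS n (k - 1)" and i: "i < k" for cs i
    proof -
      have inj: "inj_on cs {..<k-1}" using cs unfolding CS_def by simp
      have L: "card (Leaf n c) \<le> 10 * (n+1)^2" for c using card_Leaf[of n c] by linarith
      show ?thesis
      proof (cases "i = 0 \<or> i = k - 1")
        case True
        then show ?thesis unfolding Bp_def using L by auto
      next
        case False
        then have "i - 1 < k - 1" "i < k - 1" "i - 1 \<noteq> i" using i by auto
        then have "cs (i - 1) \<noteq> cs i" using inj_onD[OF inj, of "i - 1" i] by auto
        then show ?thesis unfolding Bp_def using False card_Mid by simp
      qed
    qed
    show "Tp n k \<subseteq> Sigma (CS n (k - 1)) (\<lambda>cs. PiE {..<k} (Bp n k cs))"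
      unfolding Tp_def by auto
  qed
  then show ?thesis using card_CS[of n "k - 1"] by (meson le_trans mult_le_mono1)
qed

lemma pe_other:
  assumes "e \<in> possible_edges n" "y \<in> e"
  shows "\<exists>y1. e = {y, y1} \<and> y \<in> C0 n \<and> y1 \<in> C0 n \<and> y \<noteq> y1"
proof -
  obtain a b where ab: "e = {a, b}" "a \<in> C0 n" "b \<in> C0 n" "a \<noteq> b" using assms(1) by (rule PE_elem)
  show ?thesis
  proof (cases "y = a")
    case True
    then show ?thesis using ab by blast
  next
    case False
    then have "y = b" using assms(2) ab(1) by blast
    then show ?thesis using ab by (metis insert_commute)
  qed
qed

definition Tm :: "nat \<Rightarrow> (complex \<times> complex \<times> complex) set" where
  "Tm n = {(y, y1, y2). y \<in> C0 n \<and> y1 \<in> C0 n \<and> y2 \<in> C0 n \<and> y \<noteq> y1 \<and> y \<noteq> y2 \<and> y1 \<noteq> y2}"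

definition gm :: "complex \<times> complex \<times> complex \<Rightarrow> complex set set" where
  "gm t = (case t of (y, y1, y2) \<Rightarrow> {{y, y1}, {y, y2}})"

definition gc :: "nat \<times> (nat \<Rightarrow> nat) \<times> (nat \<Rightarrow> complex set) \<Rightarrow> complex set set" where
  "gc t = (case t of (k, cs, es) \<Rightarrow> es ` {..<k})"

lemma match_event:
  assumes E: "E \<subseteq> possible_edges n" and ef: "e \<in> E" "f \<in> E" "e \<noteq> f" "e \<inter> f \<noteq> {}"
  shows "\<exists>t\<in>Tm n. gm t \<subseteq> E"
proof -
  obtain y where y: "y \<in> e" "y \<in> f" using ef(4) by blast
  obtain y1 where y1: "e = {y, y1}" "y \<in> C0 n" "y1 \<in> C0 n" "y \<noteq> y1"
    using pe_other[OF subsetD[OF E ef(1)] y(1)] by blast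
  obtain y2 where y2: "f = {y, y2}" "y \<in> C0 n" "y2 \<in> C0 n" "y \<noteq> y2"
    using pe_other[OF subsetD[OF E ef(2)] y(2)] by blast
  have "y1 \<noteq> y2" using y1(1) y2(1) ef(3) by blast
  then have "(y, y1, y2) \<in> Tm n" unfolding Tm_def using y1 y2 by simp
  moreover have "gm (y, y1, y2) \<subseteq> E" unfolding gm_def using y1(1) y2(1) ef by simp
  ultimately show ?thesis by blast
qed

lemma Tm_props:
  assumes "t \<in> Tm n"
  shows "gm t \<subseteq> possible_edges n" "card (gm t) = 2"
proof -
  obtain y y1 y2 where t: "t = (y, y1, y2)" "y \<in> C0 n" "y1 \<in> C0 n" "y2 \<in> C0 n" "y \<noteq> y1" "y \<noteq> y2" "y1 \<noteq> y2"
    using assms unfolding Tm_def by auto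
  show "gm t \<subseteq> possible_edges n" unfolding gm_def possible_edges_def using t by auto
  have "{y, y1} \<noteq> {y, y2}" using t by (metis doubleton_eq_iff)
  then show "card (gm t) = 2" unfolding gm_def using t(1) by simp
qed

lemma card_Tm: "finite (Tm n) \<and> card (Tm n) \<le> (n+1)^6"
proof -
  have sub: "Tm n \<subseteq> C0 n \<times> C0 n \<times> C0 n" unfolding Tm_def by auto
  have f: "finite (C0 n \<times> C0 n \<times> C0 n)" using fin_C0 by simp
  have "card (Tm n) \<le> card (C0 n \<times> C0 n \<times> C0 n)" using card_mono[OF f sub] .
  also have "\<dots> = card (C0 n) ^ 3" by (simp add: card_cartesian_product power3_eq_cube)
  also have "\<dots> \<le> ((n+1)^2) ^ 3" using card_C0 by (rule power_mono) simp
  also have "\<dots> = (n+1)^6" by (simp flip: power_mult)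
  finally show ?thesis using finite_subset[OF sub f] by simp
qed

lemma cyc_event:
  assumes E: "E \<subseteq> possible_edges n" and C: "is_cycle Dset E k es cs"
  shows "\<exists>t\<in>Sigma {2..card (possible_edges n)} (Tc n). gc t \<subseteq> E"
proof -
  have k: "2 \<le> k" and injes: "inj_on es {..<k}" and img: "es ` {..<k} \<subseteq> E" and injcs: "inj_on cs {..<k}"
    and cc: "\<And>i. i < k \<Longrightarrow> cs i \<in> Dset (es i) \<and> cs (prv k i) \<in> Dset (es i)"
    using C unfolding is_cycle_def by auto
  have esP: "\<And>i. i < k \<Longrightarrow> es i \<in> possible_edges n" using img E by auto
  have kM: "k \<le> card (possible_edges n)"
  proof -
    have "card (es ` {..<k}) = k" using injes by (simp add: card_image)
    moreover have "card (es ` {..<k}) \<le> card (possible_edges n)"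
      using img E fin_PE by (meson card_mono subset_trans)
    ultimately show ?thesis by simp
  qed
  let ?cs = "restrict cs {..<k}" and ?es = "restrict es {..<k}"
  have "?cs \<in> CS n k" unfolding CS_def
  proof (intro CollectI conjI)
    have "\<And>i. i < k \<Longrightarrow> cs i < n"
    proof -
      fix i assume i: "i < k"
      then have "cs i \<in> Dset (es i)" using cc by blast
      then show "cs i < n" using Dset_sub[OF esP[OF i]] by blast
    qed
    then show "?cs \<in> PiE {..<k} (\<lambda>_. {..<n})" by (auto simp: restrict_PiE_iff)
    show "inj_on ?cs {..<k}" using injcs by (simp add: inj_on_def)
  qed
  moreover have "?es \<in> PiE {..<k} (\<lambda>i. Mid n (?cs (prv k i)) (?cs i))"
    unfolding restrict_PiE_iff
  proof
    fix i assume i: "i \<in> {..<k}"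
    have "prv k i < k" using prv_lt[OF k] i by simp
    then show "es i \<in> Mid n (?cs (prv k i)) (?cs i)" unfolding Mid_def using cc esP i by simp
  qed
  moreover have "inj_on ?es {..<k}" using injes by (simp add: inj_on_def)
  ultimately have "(?cs, ?es) \<in> Tc n k" unfolding Tc_def by simp
  then have "(k, ?cs, ?es) \<in> Sigma {2..card (possible_edges n)} (Tc n)" using k kM by simp
  moreover have "gc (k, ?cs, ?es) \<subseteq> E" unfolding gc_def using img by auto
  ultimately show ?thesis by blast
qed

lemma lp_event:
  assumes E: "E \<subseteq> possible_edges n" and C: "is_lpath Dset E k es cs"
  shows "\<exists>t\<in>Sigma {2..card (possible_edges n)} (Tp n). gc t \<subseteq> E"
proof -
  have k: "2 \<le> k" and injes: "inj_on es {..<k}" and img: "es ` {..<k} \<subseteq> E" and injcs: "inj_on cs {..<k-1}"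
    and pc: "\<And>i. Suc i < k \<Longrightarrow> cs i \<in> Dset (es i) \<and> cs i \<in> Dset (es (Suc i))"
    and l0: "Dset (es 0) \<subseteq> {cs 0}" and l1: "Dset (es (k-1)) \<subseteq> {cs (k-2)}"
    using C unfolding is_lpath_def is_path_def by auto
  have esP: "\<And>i. i < k \<Longrightarrow> es i \<in> possible_edges n" using img E by auto
  have kM: "k \<le> card (possible_edges n)"
  proof -
    have "card (es ` {..<k}) = k" using injes by (simp add: card_image)
    moreover have "card (es ` {..<k}) \<le> card (possible_edges n)"
      using img E fin_PE by (meson card_mono subset_trans)
    ultimately show ?thesis by simp
  qed
  let ?cs = "restrict cs {..<k-1}" and ?es = "restrict es {..<k}"
  have "?cs \<in> CS n (k-1)" unfolding CS_def
  proof (intro CollectI conjI)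
    have "\<And>i. i < k - 1 \<Longrightarrow> cs i < n"
    proof -
      fix i assume "i < k - 1"
      then have "cs i \<in> Dset (es i)" "i < k" using pc[of i] by auto
      then show "cs i < n" using Dset_sub[OF esP[OF \<open>i < k\<close>]] by blast
    qed
    then show "?cs \<in> PiE {..<k-1} (\<lambda>_. {..<n})" by (auto simp: restrict_PiE_iff)
    show "inj_on ?cs {..<k-1}" using injcs by (simp add: inj_on_def)
  qed
  moreover have "?es \<in> PiE {..<k} (Bp n k ?cs)"
    unfolding restrict_PiE_iff
  proof
    fix i assume i: "i \<in> {..<k}"
    show "es i \<in> Bp n k ?cs i"
    proof (cases "i = 0")
      case True
      have "0 < k - 1" using k by simp
      then show ?thesis unfolding Bp_def Leaf_def using True l0 esP k by simp
    next
      case F0: False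
      show ?thesis
      proof (cases "i = k - 1")
        case True
        have "k - 2 < k - 1" using k by simp
        then show ?thesis unfolding Bp_def Leaf_def using True F0 l1 esP k by simp
      next
        case False
        then have a: "i - 1 < k - 1" "i < k - 1" using i F0 by auto
        have "cs (i - 1) \<in> Dset (es i)" using pc[of "i - 1"] F0 a by simp
        moreover have "cs i \<in> Dset (es i)" using pc[of i] a by simp
        ultimately show ?thesis unfolding Bp_def Mid_def using False F0 a esP i by simp
      qed
    qed
  qed
  moreover have "inj_on ?es {..<k}" using injes by (simp add: inj_on_def)
  ultimately have "(?cs, ?es) \<in> Tp n k" unfolding Tp_def by simp
  then have "(k, ?cs, ?es) \<in> Sigma {2..card (possible_edges n)} (Tp n)" using k kM by simp
  moreover have "gc (k, ?cs, ?es) \<subseteq> E" unfolding gc_def using img by auto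
  ultimately show ?thesis by blast
qed

lemma geom_aux:
  fixes x :: real
  assumes "0 \<le> x" "x \<le> 1/2"
  shows "(\<Sum>k\<in>{2..Suc M}. x ^ k) \<le> 2 * x^2 - 2 * x ^ (M + 2)"
proof (induction M)
  case 0
  then show ?case by (simp add: power2_eq_square)
next
  case (Suc M)
  have e: "{2..Suc (Suc M)} = insert (Suc (Suc M)) {2..Suc M}" by auto
  have "(\<Sum>k\<in>{2..Suc (Suc M)}. x ^ k) = x ^ (M + 2) + (\<Sum>k\<in>{2..Suc M}. x ^ k)"
    unfolding e by simp
  also have "\<dots> \<le> x ^ (M + 2) + (2 * x^2 - 2 * x ^ (M + 2))" using Suc by simp
  also have "\<dots> \<le> 2 * x^2 - 2 * x ^ (Suc M + 2)"
  proof -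
    have "2 * x ^ (Suc M + 2) = (2 * x) * x ^ (M + 2)" by simp
    also have "\<dots> \<le> 1 * x ^ (M + 2)" using assms by (intro mult_right_mono) auto
    finally show ?thesis by simp
  qed
  finally show ?case .
qed

lemma geom:
  fixes x :: real
  assumes "0 \<le> x" "x \<le> 1/2"
  shows "(\<Sum>k\<in>{2..M}. x ^ k) \<le> 2 * x^2"
proof -
  have "(\<Sum>k\<in>{2..M}. x ^ k) \<le> (\<Sum>k\<in>{2..Suc M}. x ^ k)"
    by (rule sum_mono2) (use assms in auto)
  also have "\<dots> \<le> 2 * x^2 - 2 * x ^ (M + 2)" by (rule geom_aux[OF assms])
  also have "\<dots> \<le> 2 * x^2" using assms by simp
  finally show ?thesis .
qed

lemma pow_bound:
  fixes p :: real
  assumes "c \<le> (n+1)^k * (10*(n+1)^2)^k" "0 \<le> p"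
  shows "real c * p ^ k \<le> (10 * (real n + 1)^3 * p) ^ k"
proof -
  have "real c \<le> real ((n+1)^k * (10*(n+1)^2)^k)" using assms(1) by linarith
  then have "real c * p ^ k \<le> real ((n+1)^k * (10*(n+1)^2)^k) * p ^ k"
    using assms(2) by (intro mult_right_mono) auto
  also have "\<dots> = ((real n + 1) * (10 * (real n + 1)^2) * p) ^ k"
    by (simp add: power_mult_distrib add.commute)
  also have "(real n + 1) * (10 * (real n + 1)^2) * p = 10 * (real n + 1)^3 * p"
    by (simp add: power2_eq_square power3_eq_cube)
  finally show ?thesis .
qed

lemma sum_sigma_bound:
  fixes p :: real
  assumes p: "0 \<le> p"
    and fT: "\<And>k. k \<in> K \<Longrightarrow> finite (T k)" and fK: "finite K"
    and cT: "\<And>k. k \<in> K \<Longrightarrow> card (T k) \<le> (n+1)^k * (10*(n+1)^2)^k"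
    and inj: "\<And>k cs es. k \<in> K \<Longrightarrow> (cs, es) \<in> T k \<Longrightarrow> inj_on es {..<k}"
  shows "(\<Sum>t\<in>Sigma K T. p ^ card (gc t)) \<le> (\<Sum>k\<in>K. (10 * (real n + 1)^3 * p) ^ k)"
proof -
  have "(\<Sum>t\<in>Sigma K T. p ^ card (gc t)) = (\<Sum>k\<in>K. \<Sum>b\<in>T k. p ^ card (gc (k, b)))"
    using fK fT by (subst sum.Sigma) auto
  also have "\<dots> = (\<Sum>k\<in>K. real (card (T k)) * p ^ k)"
  proof (rule sum.cong)
    fix k assume k: "k \<in> K"
    have "(\<Sum>b\<in>T k. p ^ card (gc (k, b))) = (\<Sum>b\<in>T k. p ^ k)"
    proof (rule sum.cong)
      fix b assume b: "b \<in> T k"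
      obtain cs es where "b = (cs, es)" by (cases b)
      then have "card (gc (k, b)) = k" unfolding gc_def using inj[OF k] b by (simp add: card_image)
      then show "p ^ card (gc (k, b)) = p ^ k" by simp
    qed simp
    then show "(\<Sum>b\<in>T k. p ^ card (gc (k, b))) = real (card (T k)) * p ^ k" by simp
  qed simp
  also have "\<dots> \<le> (\<Sum>k\<in>K. (10 * (real n + 1)^3 * p) ^ k)"
    by (rule sum_mono) (rule pow_bound[OF cT p])
  finally show ?thesis .
qed

lemma sum_Tc:
  fixes p :: real
  assumes p: "0 \<le> p"
  shows "(\<Sum>t\<in>Sigma {2..M} (Tc n). p ^ card (gc t)) \<le> (\<Sum>k\<in>{2..M}. (10 * (real n + 1)^3 * p) ^ k)"
proof (rule sum_sigma_bound[OF p])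
  show "\<And>k. k \<in> {2..M} \<Longrightarrow> finite (Tc n k)" using card_Tc by auto
  show "finite {2..M}" by simp
  show "card (Tc n k) \<le> (n+1)^k * (10*(n+1)^2)^k" if "k \<in> {2..M}" for k
  proof -
    have "card (Tc n k) \<le> n ^ k * (10 * (n+1)^2) ^ k" using card_Tc that by auto
    moreover have "n ^ k \<le> (n+1)^k" by (rule power_mono) auto
    ultimately show ?thesis by (meson le_trans mult_le_mono1)
  qed
  show "\<And>k cs es. k \<in> {2..M} \<Longrightarrow> (cs, es) \<in> Tc n k \<Longrightarrow> inj_on es {..<k}" unfolding Tc_def by simp
qed

lemma sum_Tp:
  fixes p :: real
  assumes p: "0 \<le> p"
  shows "(\<Sum>t\<in>Sigma {2..M} (Tp n). p ^ card (gc t)) \<le> (\<Sum>k\<in>{2..M}. (10 * (real n + 1)^3 * p) ^ k)"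
proof (rule sum_sigma_bound[OF p])
  show "\<And>k. k \<in> {2..M} \<Longrightarrow> finite (Tp n k)" using card_Tp by auto
  show "finite {2..M}" by simp
  show "card (Tp n k) \<le> (n+1)^k * (10*(n+1)^2)^k" if "k \<in> {2..M}" for k
  proof -
    have "card (Tp n k) \<le> n ^ (k - 1) * (10 * (n+1)^2) ^ k" using card_Tp that by auto
    moreover have "n ^ (k - 1) \<le> (n+1)^(k - 1)" by (rule power_mono) auto
    moreover have "(n+1)^(k - 1) \<le> (n+1)^k" by (rule power_increasing) auto
    ultimately show ?thesis by (meson le_trans mult_le_mono1)
  qed
  show "\<And>k cs es. k \<in> {2..M} \<Longrightarrow> (cs, es) \<in> Tp n k \<Longrightarrow> inj_on es {..<k}" unfolding Tp_def by simp
qed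

lemma gc_sub_c: "t \<in> Sigma K (Tc n) \<Longrightarrow> gc t \<subseteq> possible_edges n"
  unfolding gc_def Tc_def Mid_def by (auto simp: PiE_iff)

lemma Bp_sub: "Bp n k cs i \<subseteq> possible_edges n"
  unfolding Bp_def Mid_def Leaf_def by auto

lemma gc_sub_p:
  assumes "t \<in> Sigma K (Tp n)"
  shows "gc t \<subseteq> possible_edges n"
proof -
  obtain k cs es where t: "t = (k, cs, es)" "(cs, es) \<in> Tp n k" using assms by auto
  then have "es \<in> PiE {..<k} (Bp n k cs)" unfolding Tp_def by simp
  then have "\<And>i. i < k \<Longrightarrow> es i \<in> Bp n k cs i" by (auto simp: PiE_iff)
  then show ?thesis unfolding gc_def t(1) using Bp_sub by blast
qed

lemma bound_n:
  fixes pn :: real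
  assumes p: "0 \<le> pn" "pn \<le> 1" and x: "10 * ((real n + 1)^3 * pn) \<le> 1/2"
  shows "1 - (((real n + 1)^3 * pn)^2 + 4 * (10 * ((real n + 1)^3 * pn))^2)
         \<le> ER_prob n pn (\<lambda>E. deficiency (network_of E) = 0)"
proof -
  let ?M = "card (possible_edges n)"
  let ?x = "10 * (real n + 1)^3 * pn"
  define badm where "badm E = (\<exists>t\<in>Tm n. gm t \<subseteq> E)" for E
  define badc where "badc E = (\<exists>t\<in>Sigma {2..?M} (Tc n). gc t \<subseteq> E)" for E
  define badp where "badp E = (\<exists>t\<in>Sigma {2..?M} (Tp n). gc t \<subseteq> E)" for E
  have good: "deficiency (network_of E) = 0"
    if E: "E \<subseteq> possible_edges n" and nb: "\<not> (badm E \<or> badc E \<or> badp E)" for E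
  proof (rule deficiency_zero[OF E])
    show "e \<inter> f = {}" if "e \<in> E" "f \<in> E" "e \<noteq> f" for e f
      using match_event[OF E that] nb unfolding badm_def by blast
    show "\<not> is_cycle Dset E k es cs" for k es cs
      using cyc_event[OF E] nb unfolding badc_def by blast
    show "\<not> is_lpath Dset E k es cs" for k es cs
      using lp_event[OF E] nb unfolding badp_def by blast
  qed
  have "ER_prob n pn (\<lambda>E. \<not> (badm E \<or> badc E \<or> badp E)) \<le> ER_prob n pn (\<lambda>E. deficiency (network_of E) = 0)"
    by (rule ER_prob_mono[OF p]) (rule good)
  then have A: "1 - ER_prob n pn (\<lambda>E. badm E \<or> badc E \<or> badp E) \<le> ER_prob n pn (\<lambda>E. deficiency (network_of E) = 0)"
    unfolding ER_prob_compl[of n pn "\<lambda>E. badm E \<or> badc E \<or> badp E"] .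
  have "ER_prob n pn (\<lambda>E. badm E \<or> badc E \<or> badp E) \<le> ER_prob n pn badm + ER_prob n pn (\<lambda>E. badc E \<or> badp E)"
    by (rule ER_prob_disj[OF p])
  also have "ER_prob n pn (\<lambda>E. badc E \<or> badp E) \<le> ER_prob n pn badc + ER_prob n pn badp"
    by (rule ER_prob_disj[OF p])
  finally have B: "ER_prob n pn (\<lambda>E. badm E \<or> badc E \<or> badp E) \<le> ER_prob n pn badm + (ER_prob n pn badc + ER_prob n pn badp)"
    by simp
  have m: "ER_prob n pn badm \<le> ((real n + 1)^3 * pn)^2"
  proof -
    have "ER_prob n pn badm \<le> (\<Sum>t\<in>Tm n. pn ^ card (gm t))"
      unfolding badm_def using card_Tm Tm_props by (intro union_bound[OF p]) auto
    also have "\<dots> = (\<Sum>t\<in>Tm n. pn ^ 2)" using Tm_props by simp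
    also have "\<dots> = real (card (Tm n)) * pn ^ 2" by simp
    also have "\<dots> \<le> real ((n+1)^6) * pn ^ 2"
    proof -
      have "real (card (Tm n)) \<le> real ((n+1)^6)" using card_Tm by (simp only: of_nat_le_iff)
      then show ?thesis using p by (intro mult_right_mono) auto
    qed
    also have "\<dots> = ((real n + 1)^3 * pn)^2" by (simp add: power_mult_distrib add.commute flip: power_mult)
    finally show ?thesis .
  qed
  have c: "ER_prob n pn badc \<le> 2 * ?x^2"
  proof -
    have fin: "finite (Sigma {2..?M} (Tc n))" using card_Tc by (intro finite_SigmaI) auto
    have "ER_prob n pn badc \<le> (\<Sum>t\<in>Sigma {2..?M} (Tc n). pn ^ card (gc t))"
      unfolding badc_def using fin gc_sub_c by (intro union_bound[OF p]) auto
    also have "\<dots> \<le> (\<Sum>k\<in>{2..?M}. ?x ^ k)" by (rule sum_Tc[OF p(1)])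
    also have "\<dots> \<le> 2 * ?x^2" using x p by (intro geom) auto
    finally show ?thesis .
  qed
  have pp: "ER_prob n pn badp \<le> 2 * ?x^2"
  proof -
    have fin: "finite (Sigma {2..?M} (Tp n))" using card_Tp by (intro finite_SigmaI) auto
    have "ER_prob n pn badp \<le> (\<Sum>t\<in>Sigma {2..?M} (Tp n). pn ^ card (gc t))"
      unfolding badp_def using fin gc_sub_p by (intro union_bound[OF p]) auto
    also have "\<dots> \<le> (\<Sum>k\<in>{2..?M}. ?x ^ k)" by (rule sum_Tp[OF p(1)])
    also have "\<dots> \<le> 2 * ?x^2" using x p by (intro geom) auto
    finally show ?thesis .
  qed
  have xx: "?x^2 = 100 * ((real n + 1)^3 * pn)^2" by (simp add: power_mult_distrib)
  have "(10 * ((real n + 1)^3 * pn))^2 = 100 * ((real n + 1)^3 * pn)^2" by (simp add: power_mult_distrib)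
  then show ?thesis using A B m c pp xx by linarith
qed

theorem mainTheorem2:
  fixes p :: "nat \<Rightarrow> real"
  assumes "\<And>n. 0 \<le> p n \<and> p n \<le> 1"
    and "(\<lambda>n. real n ^ 3 * p n) \<longlonglongrightarrow> 0"
  shows "(\<lambda>n. ER_prob n (p n) (\<lambda>E. deficiency (network_of E) = 0)) \<longlonglongrightarrow> 1"
proof -
  have p0: "\<And>n. 0 \<le> p n" and p1: "\<And>n. p n \<le> 1" using assms(1) by auto
  define q where "q n = (real n + 1)^3 * p n" for n
  have q0: "q \<longlonglongrightarrow> 0"
  proof (rule tendsto_sandwich[of "\<lambda>_. 0" q sequentially "\<lambda>n. 8 * (real n ^ 3 * p n)"])
    show "\<forall>\<^sub>F n in sequentially. 0 \<le> q n" unfolding q_def using p0 by simp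
    show "\<forall>\<^sub>F n in sequentially. q n \<le> 8 * (real n ^ 3 * p n)"
      using eventually_ge_at_top[of "1::nat"]
    proof (rule eventually_mono)
      fix n :: nat assume n: "1 \<le> n"
      have "(real n + 1)^3 \<le> (2 * real n)^3" using n by (intro power_mono) auto
      also have "\<dots> = 8 * real n ^ 3" by (simp add: power_mult_distrib)
      finally have "(real n + 1)^3 * p n \<le> (8 * real n ^ 3) * p n" using p0 by (intro mult_right_mono) auto
      then show "q n \<le> 8 * (real n ^ 3 * p n)" unfolding q_def by simp
    qed
    show "(\<lambda>_. 0::real) \<longlonglongrightarrow> 0" by simp
    show "(\<lambda>n. 8 * (real n ^ 3 * p n)) \<longlonglongrightarrow> 0" using tendsto_mult_left[OF assms(2), of 8] by simp
  qed
  define b where "b n = q n ^ 2 + 4 * (10 * q n)^2" for n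
  have "(\<lambda>n. 1 - b n) \<longlonglongrightarrow> 1 - (0 ^ 2 + 4 * (10 * 0)^2)"
    unfolding b_def by (intro tendsto_intros q0)
  then have b0: "(\<lambda>n. 1 - b n) \<longlonglongrightarrow> 1" by simp
  have ev: "\<forall>\<^sub>F n in sequentially. q n < 1/20" using order_tendstoD(2)[OF q0, of "1/20"] by simp
  show ?thesis
  proof (rule tendsto_sandwich[OF _ _ b0])
    show "\<forall>\<^sub>F n in sequentially. 1 - b n \<le> ER_prob n (p n) (\<lambda>E. deficiency (network_of E) = 0)"
      using ev
    proof (rule eventually_mono)
      fix n assume "q n < 1/20"
      then have "10 * ((real n + 1)^3 * p n) \<le> 1/2" unfolding q_def by simp
      from bound_n[OF p0 p1 this] show "1 - b n \<le> ER_prob n (p n) (\<lambda>E. deficiency (network_of E) = 0)"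
        unfolding b_def q_def .
    qed
    show "\<forall>\<^sub>F n in sequentially. ER_prob n (p n) (\<lambda>E. deficiency (network_of E) = 0) \<le> 1"
    proof (rule always_eventually, rule allI)
      fix n
      show "ER_prob n (p n) (\<lambda>E. deficiency (network_of E) = 0) \<le> 1"
        using ER_prob_mono[OF p0 p1, of n "\<lambda>E. deficiency (network_of E) = 0" "\<lambda>_. True"] ER_prob_True
        by simp
    qed
    show "(\<lambda>n. 1) \<longlonglongrightarrow> 1" by simp
  qed
qed

end
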